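(* Let $X,Y$ be finite nonempty sets, $A\in\{0,1\}^{X\times Y}$, $\delta,\epsilon>0$, integers $k,\ell\ge1$, and let $\mathcal S,\mathcal T$ be $(\epsilon,\delta)$-oblivious samplers of $X$ and $Y$, respectively. Then $$\Big|\|A\|_{U(k,\ell)}^{k\ell}-\mathbb{E}_{S\in\mathcal S,\,T\in\mathcal T}\|A[S,T]\|_{U(k,\ell)}^{k\ell}\Big|\le 2\epsilon k+2\epsilon\ell+2\delta.$$
   Context: An $(\epsilon,\delta)$-oblivious sampler of a finite set $X$ is a finite nonempty family $\mathcal S$ of nonempty subsets $S\subseteq X$ such that for every function $f:X\to[0,1]$, $\Pr_{S\in\mathcal S}\big[|\mathbb{E}_{x\in X}f(x)-\mathbb{E}_{x\in S}f(x)|\le\epsilon\big]\ge1-\delta$, where $S$ is uniform over $\mathcal S$ and $\mathbb E_{x\in S}$ is the uniform average over $S$. $A[S,T]$ is the submatrix with rows $S$ and columns $T$. The $(k,\ell)$-grid norm of $M\in\mathbb{R}_{\ge0}^{X'\times Y'}$ is $\|M\|_{U(k,\ell)}=\big(\mathbb{E}_{x_1,\dots,x_k\in X',\,y_1,\dots,y_\ell\in Y'}\prod_{i,j}M(x_i,y_j)\big)^{1/(k\ell)}$. *)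

theory Defs
  imports Complex_Main "HOL-Library.FuncSet"
begin

definition avg :: "'a set \<Rightarrow> ('a \<Rightarrow> real) \<Rightarrow> real" where
  "avg S f = (\<Sum>x\<in>S. f x) / real (card S)"

text \<open>An (eps,delta)-oblivious sampler of X, given as a finite nonempty indexed family
  (S i) for i in I (indexing allows repeated members of the family); S is uniform over I.\<close>
definition oblivious_sampler ::
  "'a set \<Rightarrow> 'i set \<Rightarrow> ('i \<Rightarrow> 'a set) \<Rightarrow> real \<Rightarrow> real \<Rightarrow> bool" where
  "oblivious_sampler X I S eps delta \<longleftrightarrow>
     finite I \<and> I \<noteq> {} \<and> (\<forall>i\<in>I. S i \<noteq> {} \<and> S i \<subseteq> X) \<and>
     (\<forall>f :: 'a \<Rightarrow> real. (\<forall>x\<in>X. 0 \<le> f x \<and> f x \<le> 1) \<longrightarrow>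
        real (card {i\<in>I. \<bar>avg X f - avg (S i) f\<bar> \<le> eps}) / real (card I) \<ge> 1 - delta)"

text \<open>(k,l)-grid norm of the matrix M restricted to rows X' and columns Y'
  (so grid_norm A S T k l is the grid norm of the submatrix A[S,T]).\<close>
definition grid_norm ::
  "('a \<Rightarrow> 'b \<Rightarrow> real) \<Rightarrow> 'a set \<Rightarrow> 'b set \<Rightarrow> nat \<Rightarrow> nat \<Rightarrow> real" where
  "grid_norm M X' Y' k l =
     ((\<Sum>xs\<in>{..<k} \<rightarrow>\<^sub>E X'. \<Sum>ys\<in>{..<l} \<rightarrow>\<^sub>E Y'.
         \<Prod>i<k. \<Prod>j<l. M (xs i) (ys j))
       / (real (card X') ^ k * real (card Y') ^ l)) powr (1 / real (k * l))"

end

theory Submission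
  imports Defs
begin

lemma pow_diff_le:
  fixes a b :: real
  assumes "0 \<le> a" "a \<le> 1" "0 \<le> b" "b \<le> 1"
  shows "\<bar>a ^ n - b ^ n\<bar> \<le> real n * \<bar>a - b\<bar>"
proof (induction n)
  case 0 then show ?case by simp
next
  case (Suc n)
  have "a ^ Suc n - b ^ Suc n = a * (a ^ n - b ^ n) + b ^ n * (a - b)"
    by (simp add: algebra_simps)
  hence "\<bar>a ^ Suc n - b ^ Suc n\<bar> \<le> \<bar>a\<bar> * \<bar>a ^ n - b ^ n\<bar> + \<bar>b ^ n\<bar> * \<bar>a - b\<bar>"
    by (metis abs_mult abs_triangle_ineq)
  also have "\<dots> \<le> 1 * \<bar>a ^ n - b ^ n\<bar> + 1 * \<bar>a - b\<bar>"
    apply (intro add_mono mult_right_mono)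
    using assms by (auto simp: power_le_one)
  also have "\<dots> \<le> real n * \<bar>a - b\<bar> + \<bar>a - b\<bar>" using Suc by simp
  finally show ?case by (simp add: algebra_simps)
qed

lemma avg_bounds:
  assumes "finite S" "S \<noteq> {}" "\<forall>x\<in>S. lo \<le> f x \<and> f x \<le> hi"
  shows "lo \<le> avg S f" "avg S f \<le> hi"
proof -
  have c: "real (card S) > 0" using assms by auto
  have "(\<Sum>x\<in>S. lo) \<le> (\<Sum>x\<in>S. f x)" using assms by (intro sum_mono) auto
  thus "lo \<le> avg S f" using c by (simp add: avg_def field_simps)
  have "(\<Sum>x\<in>S. f x) \<le> (\<Sum>x\<in>S. hi)" using assms by (intro sum_mono) auto
  thus "avg S f \<le> hi" using c by (simp add: avg_def field_simps)
qed

lemma avg_const: "finite S \<Longrightarrow> S \<noteq> {} \<Longrightarrow> avg S (\<lambda>_. c) = c"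
  by (simp add: avg_def)

lemma avg_diff: "avg S f - avg S g = avg S (\<lambda>x. f x - g x)"
  by (simp add: avg_def sum_subtractf diff_divide_distrib)

lemma avg_abs: "\<bar>avg S f\<bar> \<le> avg S (\<lambda>x. \<bar>f x\<bar>)"
  by (simp add: avg_def abs_divide divide_right_mono sum_abs)

lemma avg_swap: "avg I (\<lambda>i. avg P (\<lambda>p. H i p)) = avg P (\<lambda>p. avg I (\<lambda>i. H i p))"
  unfolding avg_def
  by (simp add: sum_divide_distrib[symmetric] sum.swap[of _ P I] divide_divide_eq_left mult.commute)

lemma per_p:
  assumes os: "oblivious_sampler X I S eps delta" and fX: "finite X" and e: "eps \<ge> 0"
    and f: "\<forall>x\<in>X. 0 \<le> f x \<and> f x \<le> 1"
  shows "avg I (\<lambda>i. \<bar>avg X f ^ k - avg (S i) f ^ k\<bar>) \<le> real k * eps + delta"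
proof -
  from os have fI: "finite I" and neI: "I \<noteq> {}" and Si: "\<forall>i\<in>I. S i \<noteq> {} \<and> S i \<subseteq> X"
    and pr: "real (card {i\<in>I. \<bar>avg X f - avg (S i) f\<bar> \<le> eps}) / real (card I) \<ge> 1 - delta"
    using f unfolding oblivious_sampler_def by blast+
  have neX: "X \<noteq> {}" using Si neI by blast
  define G where "G = {i\<in>I. \<bar>avg X f - avg (S i) f\<bar> \<le> eps}"
  define h where "h i = \<bar>avg X f ^ k - avg (S i) f ^ k\<bar>" for i
  have cI: "real (card I) > 0" using fI neI by auto
  have aX: "0 \<le> avg X f" "avg X f \<le> 1" using avg_bounds[OF fX neX f] by auto
  have aS: "0 \<le> avg (S i) f \<and> avg (S i) f \<le> 1" if "i \<in> I" for i
  proof -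
    have "finite (S i)" "S i \<noteq> {}" "S i \<subseteq> X" using Si that fX finite_subset by blast+
    thus ?thesis using avg_bounds[of "S i" 0 f 1] f by auto
  qed
  have hG: "h i \<le> real k * eps" if "i \<in> G" for i
  proof -
    have "h i \<le> real k * \<bar>avg X f - avg (S i) f\<bar>"
      unfolding h_def using G_def that aX aS by (intro pow_diff_le) auto
    also have "\<dots> \<le> real k * eps" using that G_def by (intro mult_left_mono) auto
    finally show ?thesis .
  qed
  have hB: "h i \<le> 1" if "i \<in> I" for i
  proof -
    have "0 \<le> avg X f ^ k" "avg X f ^ k \<le> 1" "0 \<le> avg (S i) f ^ k" "avg (S i) f ^ k \<le> 1"
      using aX aS[OF that] by (auto simp: power_le_one)
    thus ?thesis unfolding h_def by linarith
  qed
  have GI: "G \<subseteq> I" "finite G" using fI G_def by auto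
  have "(\<Sum>i\<in>I. h i) = (\<Sum>i\<in>G. h i) + (\<Sum>i\<in>I - G. h i)"
    using GI fI by (metis sum.subset_diff add.commute)
  also have "\<dots> \<le> (\<Sum>i\<in>G. real k * eps) + (\<Sum>i\<in>I - G. 1)"
    using hG hB by (intro add_mono sum_mono) auto
  also have "\<dots> = real (card G) * (real k * eps) + real (card I - card G)"
    using GI fI by (simp add: card_Diff_subset)
  also have "\<dots> \<le> real (card I) * (real k * eps) + delta * real (card I)"
  proof -
    have "card G \<le> card I" using GI fI card_mono by blast
    moreover have "real (card G) \<ge> (1 - delta) * real (card I)"
      using pr cI unfolding G_def[symmetric] by (simp add: field_simps)
    moreover have "real (card G) * (real k * eps) \<le> real (card I) * (real k * eps)"
      using \<open>card G \<le> card I\<close> e by (intro mult_right_mono) auto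
    ultimately show ?thesis by (simp add: of_nat_diff algebra_simps)
  qed
  finally have "(\<Sum>i\<in>I. h i) \<le> real (card I) * (real k * eps + delta)" by (simp add: algebra_simps)
  hence "avg I h \<le> real k * eps + delta" unfolding avg_def using cI by (simp add: field_simps)
  thus ?thesis unfolding h_def .
qed

lemma key:
  assumes os: "oblivious_sampler X I S eps delta" and fX: "finite X" and e: "eps \<ge> 0"
    and P: "finite P" "P \<noteq> {}"
    and g: "\<forall>p\<in>P. \<forall>x\<in>X. 0 \<le> g p x \<and> g p x \<le> 1"
  shows "\<bar>avg P (\<lambda>p. avg X (g p) ^ k) - avg I (\<lambda>i. avg P (\<lambda>p. avg (S i) (g p) ^ k))\<bar>
           \<le> real k * eps + delta"
proof -
  from os have fI: "finite I" and neI: "I \<noteq> {}" unfolding oblivious_sampler_def by auto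
  have "avg P (\<lambda>p. avg X (g p) ^ k) - avg I (\<lambda>i. avg P (\<lambda>p. avg (S i) (g p) ^ k))
      = avg P (\<lambda>p. avg I (\<lambda>i. avg X (g p) ^ k)) - avg P (\<lambda>p. avg I (\<lambda>i. avg (S i) (g p) ^ k))"
    using avg_const[OF fI neI] avg_swap by simp
  also have "\<dots> = avg P (\<lambda>p. avg I (\<lambda>i. avg X (g p) ^ k - avg (S i) (g p) ^ k))"
    by (simp add: avg_diff)
  finally have "\<bar>avg P (\<lambda>p. avg X (g p) ^ k) - avg I (\<lambda>i. avg P (\<lambda>p. avg (S i) (g p) ^ k))\<bar>
     \<le> avg P (\<lambda>p. \<bar>avg I (\<lambda>i. avg X (g p) ^ k - avg (S i) (g p) ^ k)\<bar>)"
    using avg_abs by simp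
  also have "\<dots> \<le> real k * eps + delta"
  proof (rule avg_bounds(2)[OF P, where lo=0], intro ballI conjI)
    fix p assume p: "p \<in> P"
    have "\<bar>avg I (\<lambda>i. avg X (g p) ^ k - avg (S i) (g p) ^ k)\<bar>
       \<le> avg I (\<lambda>i. \<bar>avg X (g p) ^ k - avg (S i) (g p) ^ k\<bar>)" by (rule avg_abs)
    also have "\<dots> \<le> real k * eps + delta" using per_p[OF os fX e] g p by blast
    finally show "\<bar>avg I (\<lambda>i. avg X (g p) ^ k - avg (S i) (g p) ^ k)\<bar> \<le> real k * eps + delta" .
  qed simp
  finally show ?thesis .
qed

definition NN :: "('a \<Rightarrow> 'b \<Rightarrow> real) \<Rightarrow> 'a set \<Rightarrow> 'b set \<Rightarrow> nat \<Rightarrow> nat \<Rightarrow> real" where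
  "NN M X' Y' k l = (\<Sum>xs\<in>{..<k} \<rightarrow>\<^sub>E X'. \<Sum>ys\<in>{..<l} \<rightarrow>\<^sub>E Y'.
         \<Prod>i<k. \<Prod>j<l. M (xs i) (ys j))
       / (real (card X') ^ k * real (card Y') ^ l)"

lemma grid_pow:
  assumes "NN M X' Y' k l \<ge> 0" "k \<ge> 1" "l \<ge> 1"
  shows "grid_norm M X' Y' k l ^ (k * l) = NN M X' Y' k l"
proof -
  have gn: "grid_norm M X' Y' k l = NN M X' Y' k l powr (1 / real (k * l))"
    unfolding grid_norm_def NN_def ..
  show ?thesis
  proof (cases "NN M X' Y' k l = 0")
    case True thus ?thesis using assms gn by simp
  next
    case False
    hence pos: "NN M X' Y' k l > 0" using assms by simp
    have "(NN M X' Y' k l powr (1 / real (k * l))) ^ (k * l)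
        = (NN M X' Y' k l powr (1 / real (k * l))) powr real (k * l)"
      using pos by (intro powr_realpow[symmetric]) simp
    also have "\<dots> = NN M X' Y' k l" using pos assms
      by (simp add: powr_powr)
    finally show ?thesis using gn by simp
  qed
qed

lemma decomp_rows:
  assumes "finite X'" "finite Y'" "X' \<noteq> {}" "Y' \<noteq> {}"
  shows "NN M X' Y' k l = avg ({..<l} \<rightarrow>\<^sub>E Y') (\<lambda>ys. avg X' (\<lambda>x. \<Prod>j<l. M x (ys j)) ^ k)"
proof -
  have cX: "real (card X') > 0" and cY: "real (card Y') > 0" using assms by auto
  have "(\<Sum>xs\<in>{..<k} \<rightarrow>\<^sub>E X'. \<Sum>ys\<in>{..<l} \<rightarrow>\<^sub>E Y'. \<Prod>i<k. \<Prod>j<l. M (xs i) (ys j))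
      = (\<Sum>ys\<in>{..<l} \<rightarrow>\<^sub>E Y'. \<Sum>xs\<in>{..<k} \<rightarrow>\<^sub>E X'. \<Prod>i<k. \<Prod>j<l. M (xs i) (ys j))"
    by (rule sum.swap)
  also have "\<dots> = (\<Sum>ys\<in>{..<l} \<rightarrow>\<^sub>E Y'. (\<Sum>x\<in>X'. \<Prod>j<l. M x (ys j)) ^ k)"
  proof (rule sum.cong[OF refl])
    fix ys
    have "(\<Sum>xs\<in>{..<k} \<rightarrow>\<^sub>E X'. \<Prod>i<k. \<Prod>j<l. M (xs i) (ys j))
        = (\<Prod>i<k. \<Sum>x\<in>X'. \<Prod>j<l. M x (ys j))"
      using prod_sum_PiE[of "{..<k}" "\<lambda>_. X'" "\<lambda>i x. \<Prod>j<l. M x (ys j)"] assms by simp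
    thus "(\<Sum>xs\<in>{..<k} \<rightarrow>\<^sub>E X'. \<Prod>i<k. \<Prod>j<l. M (xs i) (ys j))
        = (\<Sum>x\<in>X'. \<Prod>j<l. M x (ys j)) ^ k" by simp
  qed
  finally have e: "(\<Sum>xs\<in>{..<k} \<rightarrow>\<^sub>E X'. \<Sum>ys\<in>{..<l} \<rightarrow>\<^sub>E Y'. \<Prod>i<k. \<Prod>j<l. M (xs i) (ys j))
      = (\<Sum>ys\<in>{..<l} \<rightarrow>\<^sub>E Y'. (\<Sum>x\<in>X'. \<Prod>j<l. M x (ys j)) ^ k)" .
  have c: "card ({..<l} \<rightarrow>\<^sub>E Y') = card Y' ^ l" by (simp add: card_PiE)
  show ?thesis unfolding NN_def e avg_def c
    by (simp add: power_divide sum_divide_distrib[symmetric] field_simps)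
qed

lemma decomp_cols:
  assumes "finite X'" "finite Y'" "X' \<noteq> {}" "Y' \<noteq> {}"
  shows "NN M X' Y' k l = avg ({..<k} \<rightarrow>\<^sub>E X') (\<lambda>xs. avg Y' (\<lambda>y. \<Prod>i<k. M (xs i) y) ^ l)"
proof -
  have "(\<Sum>xs\<in>{..<k} \<rightarrow>\<^sub>E X'. \<Sum>ys\<in>{..<l} \<rightarrow>\<^sub>E Y'. \<Prod>i<k. \<Prod>j<l. M (xs i) (ys j))
      = (\<Sum>xs\<in>{..<k} \<rightarrow>\<^sub>E X'. (\<Sum>y\<in>Y'. \<Prod>i<k. M (xs i) y) ^ l)"
  proof (rule sum.cong[OF refl])
    fix xs
    have "(\<Sum>ys\<in>{..<l} \<rightarrow>\<^sub>E Y'. \<Prod>i<k. \<Prod>j<l. M (xs i) (ys j))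
        = (\<Sum>ys\<in>{..<l} \<rightarrow>\<^sub>E Y'. \<Prod>j<l. \<Prod>i<k. M (xs i) (ys j))"
      by (simp add: prod.swap[of _ "{..<k}"])
    also have "\<dots> = (\<Prod>j<l. \<Sum>y\<in>Y'. \<Prod>i<k. M (xs i) y)"
      using prod_sum_PiE[of "{..<l}" "\<lambda>_. Y'" "\<lambda>j y. \<Prod>i<k. M (xs i) y"] assms by simp
    finally show "(\<Sum>ys\<in>{..<l} \<rightarrow>\<^sub>E Y'. \<Prod>i<k. \<Prod>j<l. M (xs i) (ys j))
        = (\<Sum>y\<in>Y'. \<Prod>i<k. M (xs i) y) ^ l" by simp
  qed
  moreover have c: "card ({..<k} \<rightarrow>\<^sub>E X') = card X' ^ k" by (simp add: card_PiE)
  ultimately show ?thesis unfolding NN_def avg_def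
    by (simp add: power_divide sum_divide_distrib[symmetric] field_simps)
qed

lemma avg_cong: "(\<And>x. x \<in> S \<Longrightarrow> f x = g x) \<Longrightarrow> avg S f = avg S g"
  unfolding avg_def by (metis sum.cong)

lemma NN_nonneg:
  assumes "\<forall>x\<in>X'. \<forall>y\<in>Y'. 0 \<le> M x y"
  shows "NN M X' Y' k l \<ge> 0"
  unfolding NN_def using assms
  by (intro divide_nonneg_nonneg sum_nonneg prod_nonneg) (auto simp: PiE_iff)

lemma prod_01:
  fixes h :: "nat \<Rightarrow> real"
  assumes "\<forall>j<n. 0 \<le> h j \<and> h j \<le> 1"
  shows "0 \<le> (\<Prod>j<n. h j) \<and> (\<Prod>j<n. h j) \<le> 1"
  using assms by (auto intro: prod_nonneg prod_le_1)

theorem lemma4p7: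
  fixes X :: "'a set" and Y :: "'b set" and A :: "'a \<Rightarrow> 'b \<Rightarrow> real"
    and I :: "'i set" and S :: "'i \<Rightarrow> 'a set"
    and J :: "'j set" and T :: "'j \<Rightarrow> 'b set"
    and eps delta :: real and k l :: nat
  assumes "finite X" "X \<noteq> {}" "finite Y" "Y \<noteq> {}"
    and "\<forall>x\<in>X. \<forall>y\<in>Y. A x y \<in> {0, 1}"
    and "delta > 0" "eps > 0" "k \<ge> 1" "l \<ge> 1"
    and "oblivious_sampler X I S eps delta"
    and "oblivious_sampler Y J T eps delta"
  shows "\<bar>grid_norm A X Y k l ^ (k * l)
           - (\<Sum>i\<in>I. \<Sum>j\<in>J. grid_norm A (S i) (T j) k l ^ (k * l))
               / (real (card I) * real (card J))\<bar>
         \<le> 2 * eps * real k + 2 * eps * real l + 2 * delta"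
proof -
  note fX = assms(1) and neX = assms(2) and fY = assms(3) and neY = assms(4)
  note os1 = assms(10) and os2 = assms(11)
  have e: "eps \<ge> 0" using assms by simp
  from os1 have fI: "finite I" and neI: "I \<noteq> {}" and Si: "\<And>i. i \<in> I \<Longrightarrow> S i \<noteq> {} \<and> S i \<subseteq> X"
    unfolding oblivious_sampler_def by auto
  from os2 have fJ: "finite J" and neJ: "J \<noteq> {}" and Tj: "\<And>j. j \<in> J \<Longrightarrow> T j \<noteq> {} \<and> T j \<subseteq> Y"
    unfolding oblivious_sampler_def by auto
  have fS: "finite (S i)" if "i \<in> I" for i using Si[OF that] fX finite_subset by blast
  have fT: "finite (T j)" if "j \<in> J" for j using Tj[OF that] fY finite_subset by blast
  have A01: "0 \<le> A x y \<and> A x y \<le> 1" if "x \<in> X" "y \<in> Y" for x y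
  proof -
    have "A x y = 0 \<or> A x y = 1" using assms(5) that by auto
    thus ?thesis by auto
  qed
  have gp: "grid_norm A X' Y' k l ^ (k * l) = NN A X' Y' k l" if "X' \<subseteq> X" "Y' \<subseteq> Y" for X' Y'
    using that A01 assms(8,9) by (intro grid_pow NN_nonneg) auto
  define P1 where "P1 = {..<l} \<rightarrow>\<^sub>E Y"
  define g1 where "g1 ys x = (\<Prod>j<l. A x (ys j))" for ys x
  have P1: "finite P1" "P1 \<noteq> {}" unfolding P1_def using fY neY
    by (auto simp: finite_PiE PiE_eq_empty_iff)
  have g1: "\<forall>p\<in>P1. \<forall>x\<in>X. 0 \<le> g1 p x \<and> g1 p x \<le> 1"
    unfolding g1_def P1_def using A01 by (auto intro!: prod_01 simp: PiE_iff)
  have k1: "\<bar>NN A X Y k l - avg I (\<lambda>i. NN A (S i) Y k l)\<bar> \<le> real k * eps + delta"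
  proof -
    have "NN A X Y k l = avg P1 (\<lambda>p. avg X (g1 p) ^ k)"
      unfolding P1_def g1_def by (rule decomp_rows[OF fX fY neX neY])
    moreover have "avg I (\<lambda>i. NN A (S i) Y k l) = avg I (\<lambda>i. avg P1 (\<lambda>p. avg (S i) (g1 p) ^ k))"
      unfolding P1_def g1_def by (rule avg_cong, rule decomp_rows) (use fS Si fY neY in auto)
    ultimately show ?thesis using key[OF os1 fX e P1 g1] by simp
  qed
  have k2: "\<bar>NN A (S i) Y k l - avg J (\<lambda>j. NN A (S i) (T j) k l)\<bar> \<le> real l * eps + delta"
    if i: "i \<in> I" for i
  proof -
    define P2 where "P2 = {..<k} \<rightarrow>\<^sub>E S i"
    define g2 where "g2 xs y = (\<Prod>i<k. A (xs i) y)" for xs y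
    have P2: "finite P2" "P2 \<noteq> {}" unfolding P2_def using fS[OF i] Si[OF i]
      by (auto simp: finite_PiE PiE_eq_empty_iff)
    have g2: "\<forall>p\<in>P2. \<forall>y\<in>Y. 0 \<le> g2 p y \<and> g2 p y \<le> 1"
      unfolding g2_def P2_def using A01 Si[OF i] by (auto intro!: prod_01 simp: PiE_iff)
    have "NN A (S i) Y k l = avg P2 (\<lambda>p. avg Y (g2 p) ^ l)"
      unfolding P2_def g2_def by (rule decomp_cols) (use fS[OF i] Si[OF i] fY neY in auto)
    moreover have "avg J (\<lambda>j. NN A (S i) (T j) k l) = avg J (\<lambda>j. avg P2 (\<lambda>p. avg (T j) (g2 p) ^ l))"
      unfolding P2_def g2_def by (rule avg_cong, rule decomp_cols) (use fS[OF i] Si[OF i] fT Tj in auto)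
    ultimately show ?thesis using key[OF os2 fY e P2 g2] by simp
  qed
  have E: "(\<Sum>i\<in>I. \<Sum>j\<in>J. grid_norm A (S i) (T j) k l ^ (k * l)) / (real (card I) * real (card J))
      = avg I (\<lambda>i. avg J (\<lambda>j. NN A (S i) (T j) k l))"
  proof -
    have "(\<Sum>i\<in>I. \<Sum>j\<in>J. grid_norm A (S i) (T j) k l ^ (k * l))
        = (\<Sum>i\<in>I. \<Sum>j\<in>J. NN A (S i) (T j) k l)"
      using gp Si Tj by (intro sum.cong refl) auto
    thus ?thesis unfolding avg_def
      by (simp add: sum_divide_distrib[symmetric] divide_divide_eq_left mult.commute)
  qed
  have k3: "\<bar>avg I (\<lambda>i. NN A (S i) Y k l - avg J (\<lambda>j. NN A (S i) (T j) k l))\<bar> \<le> real l * eps + delta"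
  proof -
    have "\<bar>avg I (\<lambda>i. NN A (S i) Y k l - avg J (\<lambda>j. NN A (S i) (T j) k l))\<bar>
        \<le> avg I (\<lambda>i. \<bar>NN A (S i) Y k l - avg J (\<lambda>j. NN A (S i) (T j) k l)\<bar>)" by (rule avg_abs)
    also have "\<dots> \<le> real l * eps + delta"
      using k2 by (intro avg_bounds(2)[OF fI neI, where lo=0]) auto
    finally show ?thesis .
  qed
  have "grid_norm A X Y k l ^ (k * l) - avg I (\<lambda>i. avg J (\<lambda>j. NN A (S i) (T j) k l))
     = (NN A X Y k l - avg I (\<lambda>i. NN A (S i) Y k l))
       + avg I (\<lambda>i. NN A (S i) Y k l - avg J (\<lambda>j. NN A (S i) (T j) k l))"
    using gp[of X Y] by (simp add: avg_diff[symmetric])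
  hence "\<bar>grid_norm A X Y k l ^ (k * l) - avg I (\<lambda>i. avg J (\<lambda>j. NN A (S i) (T j) k l))\<bar>
      \<le> real k * eps + delta + (real l * eps + delta)"
    using k1 k3 by linarith
  also have "\<dots> \<le> 2 * eps * real k + 2 * eps * real l + 2 * delta"
    using e by (simp add: algebra_simps)
  finally show ?thesis unfolding E .
qed

end
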